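(* Let $(X,A)$ be a relative fat CW complex with fat skeleta $X^{(n)}$. For each $n\ge0$, the canonical map $\hat i_n:X^{(n-1)}\to X^{(n)}$ is an induction.
   Context: An induction is an injective smooth map that is a diffeomorphism onto its image with the subset diffeology. Let $\ell(t)=0$ for $t\le0$, $e^{-1/t}$ for $t>0$; $\alpha_0=\int_0^1\ell(3x)\ell(3-3x)dx$; $\lambda(t)=\frac1{\alpha_0}\int_0^t\ell(3x)\ell(3-3x)dx$; $\phi(t)=\int_0^{1/2+t}\lambda(x)dx$. For integers $n,m\ge0$: $\mathbb{D}^{n,m}=\{(u,v)\in\mathbb{R}^n\times\mathbb{R}^m:\|u\|\ge1-\phi(2-\|u\|-\|v\|)\}$, $\mathbb{S}^{n-1,m}=\{(u,v):\|u\|\ge1\}$ (empty for $n=0$), with subset diffeologies. A relative fat CW complex $(X,A)$ consists of a diffeological space $X$, subspaces $A=X^{(-1)}\subset X^{(0)}\subset\cdots$, index sets $J_n$, maps $m_n:J_n\to\mathbb{N}_0$ and smooth maps $h_n:\coprod_{j\in J_n}\mathbb{S}^{n-1,m_n(j)}\to X^{(n-1)}$ such that $X^{(n)}$ is the pushout in the category of diffeological spaces of the inclusion $i_n:\coprod_j\mathbb{S}^{n-1,m_n(j)}\hookrightarrow\coprod_j\mathbb{D}^{n,m_n(j)}$ and $h_n$, with induced maps $\hat i_n:X^{(n-1)}\to X^{(n)}$ and $\hat h_n:\coprod_j\mathbb{D}^{n,m_n(j)}\to X^{(n)}$, and $X$ is the diffeological colimit of the $X^{(n)}$. *)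

theory Defs
  imports "HOL-Analysis.Analysis"
begin

type_synonym vec = "nat \<Rightarrow> real"

definition Rn :: "nat \<Rightarrow> vec set" where
  "Rn n = {x. \<forall>i\<ge>n. x i = 0}"

text \<open>Open subsets of R^n (the product topology on nat => real restricts to
  the Euclidean topology on Rn n).\<close>
definition open_in_Rn :: "nat \<Rightarrow> vec set \<Rightarrow> bool" where
  "open_in_Rn n U \<longleftrightarrow> openin (top_of_set (Rn n)) U"

definition enorm :: "nat \<Rightarrow> vec \<Rightarrow> real" where
  "enorm n u = sqrt (\<Sum>i<n. (u i)\<^sup>2)"

fun Ck :: "nat \<Rightarrow> nat \<Rightarrow> vec set \<Rightarrow> (vec \<Rightarrow> real) \<Rightarrow> bool" where
  "Ck 0 n U F \<longleftrightarrow> continuous_on U F"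
| "Ck (Suc k) n U F \<longleftrightarrow> continuous_on U F \<and>
     (\<forall>i<n. \<exists>G. (\<forall>x\<in>U. ((\<lambda>t. F (x(i := x i + t))) has_real_derivative G x) (at 0))
                 \<and> Ck k n U G)"

definition smooth_fun :: "nat \<Rightarrow> vec set \<Rightarrow> (vec \<Rightarrow> real) \<Rightarrow> bool" where
  "smooth_fun n U F \<longleftrightarrow> (\<forall>k. Ck k n U F)"

definition smooth_eucl :: "nat \<Rightarrow> vec set \<Rightarrow> nat \<Rightarrow> vec set \<Rightarrow> (vec \<Rightarrow> vec) \<Rightarrow> bool" where
  "smooth_eucl m V n U f \<longleftrightarrow> f ` V \<subseteq> U \<and> (\<forall>i<n. smooth_fun m V (\<lambda>y. f y i))"

text \<open>A diffeology on a set X (inside the type 'a) is given by its plots: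
  D n U p means that p (restricted to U) is a plot with domain the open
  set U of R^n.\<close>
type_synonym 'a diffeology = "nat \<Rightarrow> vec set \<Rightarrow> (vec \<Rightarrow> 'a) \<Rightarrow> bool"

definition diffeology :: "'a set \<Rightarrow> 'a diffeology \<Rightarrow> bool" where
  "diffeology X D \<longleftrightarrow>
     (\<forall>n U p. D n U p \<longrightarrow> open_in_Rn n U \<and> p ` U \<subseteq> X) \<and>
     (\<forall>n U p q. D n U p \<longrightarrow> (\<forall>x\<in>U. p x = q x) \<longrightarrow> D n U q) \<and>
     (\<forall>n U x. open_in_Rn n U \<longrightarrow> x \<in> X \<longrightarrow> D n U (\<lambda>_. x)) \<and>
     (\<forall>n U p. open_in_Rn n U \<longrightarrow> p ` U \<subseteq> X \<longrightarrow>
        (\<forall>u\<in>U. \<exists>V. open_in_Rn n V \<and> u \<in> V \<and> V \<subseteq> U \<and> D n V p) \<longrightarrow> D n U p) \<and>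
     (\<forall>n U p m V f. D n U p \<longrightarrow> open_in_Rn m V \<longrightarrow> smooth_eucl m V n U f \<longrightarrow> D m V (p \<circ> f))"

definition smooth_map :: "'a set \<Rightarrow> 'a diffeology \<Rightarrow> 'b set \<Rightarrow> 'b diffeology \<Rightarrow> ('a \<Rightarrow> 'b) \<Rightarrow> bool" where
  "smooth_map X DX Y DY f \<longleftrightarrow> f ` X \<subseteq> Y \<and> (\<forall>n U p. DX n U p \<longrightarrow> DY n U (f \<circ> p))"

definition subset_diffeology :: "'a diffeology \<Rightarrow> 'a set \<Rightarrow> 'a diffeology" where
  "subset_diffeology D S = (\<lambda>n U p. D n U p \<and> p ` U \<subseteq> S)"

definition diffeomorphism :: "'a set \<Rightarrow> 'a diffeology \<Rightarrow> 'b set \<Rightarrow> 'b diffeology \<Rightarrow> ('a \<Rightarrow> 'b) \<Rightarrow> bool" where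
  "diffeomorphism X DX Y DY f \<longleftrightarrow> bij_betw f X Y \<and> smooth_map X DX Y DY f
      \<and> smooth_map Y DY X DX (inv_into X f)"

definition induction :: "'a set \<Rightarrow> 'a diffeology \<Rightarrow> 'b set \<Rightarrow> 'b diffeology \<Rightarrow> ('a \<Rightarrow> 'b) \<Rightarrow> bool" where
  "induction X DX Y DY f \<longleftrightarrow> inj_on f X \<and> smooth_map X DX Y DY f
      \<and> diffeomorphism X DX (f ` X) (subset_diffeology DY (f ` X)) f"

definition prod_Rn :: "nat \<Rightarrow> nat \<Rightarrow> (vec \<times> vec) set" where
  "prod_Rn n m = Rn n \<times> Rn m"

definition std_diffeology :: "nat \<Rightarrow> nat \<Rightarrow> (vec \<times> vec) diffeology" where
  "std_diffeology n m = (\<lambda>k U p. open_in_Rn k U \<and> p ` U \<subseteq> prod_Rn n m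
      \<and> (\<forall>i<n. smooth_fun k U (\<lambda>y. fst (p y) i))
      \<and> (\<forall>i<m. smooth_fun k U (\<lambda>y. snd (p y) i)))"

definition coprod_set :: "'j set \<Rightarrow> ('j \<Rightarrow> 'a set) \<Rightarrow> ('j \<times> 'a) set" where
  "coprod_set J K = {(j, x). j \<in> J \<and> x \<in> K j}"

definition coprod_diffeology :: "'j set \<Rightarrow> ('j \<Rightarrow> 'a set) \<Rightarrow> ('j \<Rightarrow> 'a diffeology) \<Rightarrow> ('j \<times> 'a) diffeology" where
  "coprod_diffeology J K E = (\<lambda>n U p. open_in_Rn n U \<and> p ` U \<subseteq> coprod_set J K \<and>
      (\<forall>x\<in>U. \<exists>V. open_in_Rn n V \<and> x \<in> V \<and> V \<subseteq> U \<and>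
         (\<exists>j\<in>J. \<exists>q. E j n V q \<and> (\<forall>y\<in>V. p y = (j, q y)))))"

definition ell :: "real \<Rightarrow> real" where
  "ell t = (if t \<le> 0 then 0 else exp (- 1 / t))"

definition sint :: "real \<Rightarrow> real \<Rightarrow> (real \<Rightarrow> real) \<Rightarrow> real" where
  "sint a b f = (if a \<le> b then integral {a..b} f else - integral {b..a} f)"

definition bump :: "real \<Rightarrow> real" where
  "bump x = ell (3 * x) * ell (3 - 3 * x)"

definition alpha0 :: real where
  "alpha0 = integral {0..1} bump"

definition lam :: "real \<Rightarrow> real" where
  "lam t = sint 0 t bump / alpha0"

definition phi :: "real \<Rightarrow> real" where
  "phi t = sint 0 (1/2 + t) lam"

definition fat_disk :: "nat \<Rightarrow> nat \<Rightarrow> (vec \<times> vec) set" where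
  "fat_disk n m = {(u, v) \<in> prod_Rn n m. enorm n u \<ge> 1 - phi (2 - enorm n u - enorm m v)}"

definition fat_sphere :: "nat \<Rightarrow> nat \<Rightarrow> (vec \<times> vec) set" where
  "fat_sphere n m = {(u, v) \<in> prod_Rn n m. enorm n u \<ge> 1}"
  \<comment> \<open>this is S^{n-1,m}; it is empty for n = 0\<close>

definition fat_disk_diff :: "nat \<Rightarrow> nat \<Rightarrow> (vec \<times> vec) diffeology" where
  "fat_disk_diff n m = subset_diffeology (std_diffeology n m) (fat_disk n m)"

definition fat_sphere_diff :: "nat \<Rightarrow> nat \<Rightarrow> (vec \<times> vec) diffeology" where
  "fat_sphere_diff n m = subset_diffeology (std_diffeology n m) (fat_sphere n m)"

text \<open>The square  S --f--> B,  S --g--> C,  B --fb--> P,  C --gc--> P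
  is a pushout in the category of diffeological spaces: it commutes,
  P is the set-theoretic pushout (jointly surjective, with the identifications
  exactly the equivalence relation generated by f s ~ g s), and the
  diffeology of P is the final (quotient) diffeology of the coproduct B + C.\<close>
definition diff_pushout ::
  "'s set \<Rightarrow> 's diffeology \<Rightarrow> 'b set \<Rightarrow> 'b diffeology \<Rightarrow> 'c set \<Rightarrow> 'c diffeology
   \<Rightarrow> 'p set \<Rightarrow> 'p diffeology \<Rightarrow> ('s \<Rightarrow> 'b) \<Rightarrow> ('s \<Rightarrow> 'c) \<Rightarrow> ('b \<Rightarrow> 'p) \<Rightarrow> ('c \<Rightarrow> 'p) \<Rightarrow> bool" where
  "diff_pushout S DS B DB C DC P DP f g fb gc \<longleftrightarrow>
     smooth_map S DS B DB f \<and> smooth_map S DS C DC g \<and>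
     fb ` B \<subseteq> P \<and> gc ` C \<subseteq> P \<and>
     (\<forall>s\<in>S. fb (f s) = gc (g s)) \<and>
     P = fb ` B \<union> gc ` C \<and>
     (\<forall>x\<in>B <+> C. \<forall>y\<in>B <+> C.
        case_sum fb gc x = case_sum fb gc y \<longleftrightarrow>
        (x, y) \<in> (({(Inl (f s), Inr (g s)) | s. s \<in> S}) \<union> ({(Inl (f s), Inr (g s)) | s. s \<in> S})\<inverse>)\<^sup>*) \<and>
     (\<forall>n U p. DP n U p \<longleftrightarrow> open_in_Rn n U \<and> p ` U \<subseteq> P \<and>
        (\<forall>x\<in>U. \<exists>V. open_in_Rn n V \<and> x \<in> V \<and> V \<subseteq> U \<and>
           ((\<exists>q. DB n V q \<and> (\<forall>y\<in>V. p y = fb (q y))) \<or>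
            (\<exists>q. DC n V q \<and> (\<forall>y\<in>V. p y = gc (q y))))))"

definition diff_seq_colimit ::
  "'a set \<Rightarrow> 'a diffeology \<Rightarrow> (nat \<Rightarrow> 'a set) \<Rightarrow> (nat \<Rightarrow> 'a diffeology) \<Rightarrow> bool" where
  "diff_seq_colimit X DX Xs DXs \<longleftrightarrow>
     (\<forall>k. Xs k \<subseteq> Xs (Suc k)) \<and> X = (\<Union>k. Xs k) \<and>
     (\<forall>n U p. DX n U p \<longleftrightarrow> open_in_Rn n U \<and> p ` U \<subseteq> X \<and>
        (\<forall>x\<in>U. \<exists>V. open_in_Rn n V \<and> x \<in> V \<and> V \<subseteq> U \<and> (\<exists>k. DXs k n V p)))"

text \<open>Indexing convention: Xs 0 = A = X^(-1), and Xs (Suc n) = X^(n).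
  Cells of dimension n are indexed by J n, with m n j the extra dimension,
  attaching map h n : coprod S^{n-1, m n j} -> X^(n-1), and
  hh n : coprod D^{n, m n j} -> X^(n) the induced map; the induced map
  X^(n-1) -> X^(n) is the inclusion.\<close>
definition rel_fat_CW ::
  "'a set \<Rightarrow> 'a diffeology \<Rightarrow> (nat \<Rightarrow> 'a set) \<Rightarrow> (nat \<Rightarrow> 'a diffeology)
   \<Rightarrow> (nat \<Rightarrow> 'j set) \<Rightarrow> (nat \<Rightarrow> 'j \<Rightarrow> nat)
   \<Rightarrow> (nat \<Rightarrow> 'j \<times> (vec \<times> vec) \<Rightarrow> 'a) \<Rightarrow> (nat \<Rightarrow> 'j \<times> (vec \<times> vec) \<Rightarrow> 'a) \<Rightarrow> bool" where
  "rel_fat_CW X DX Xs DXs J m h hh \<longleftrightarrow>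
     diffeology X DX \<and> (\<forall>k. diffeology (Xs k) (DXs k)) \<and>
     (\<forall>n. diff_pushout
        (coprod_set (J n) (\<lambda>j. fat_sphere n (m n j)))
        (coprod_diffeology (J n) (\<lambda>j. fat_sphere n (m n j)) (\<lambda>j. fat_sphere_diff n (m n j)))
        (coprod_set (J n) (\<lambda>j. fat_disk n (m n j)))
        (coprod_diffeology (J n) (\<lambda>j. fat_disk n (m n j)) (\<lambda>j. fat_disk_diff n (m n j)))
        (Xs n) (DXs n)
        (Xs (Suc n)) (DXs (Suc n))
        (\<lambda>x. x) (h n) (hh n) (\<lambda>x. x)) \<and>
     diff_seq_colimit X DX Xs DXs"

end

theory Submission
  imports Defs
begin

lemma diffeo_axs: assumes dC: "diffeology C DC"
 shows ax1: "\<And>k U p. DC k U p \<Longrightarrow> open_in_Rn k U \<and> p ` U \<subseteq> C"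
    and ax2: "\<And>k U p q. DC k U p \<Longrightarrow> (\<forall>x\<in>U. p x = q x) \<Longrightarrow> DC k U q"
    and ax4: "\<And>k U p. open_in_Rn k U \<Longrightarrow> p ` U \<subseteq> C \<Longrightarrow>
        (\<forall>u\<in>U. \<exists>V. open_in_Rn k V \<and> u \<in> V \<and> V \<subseteq> U \<and> DC k V p) \<Longrightarrow> DC k U p"
proof -
  have A: "\<forall>n U p. DC n U p \<longrightarrow> open_in_Rn n U \<and> p ` U \<subseteq> C"
    using dC unfolding diffeology_def by (elim conjE) assumption
  have B: "\<forall>n U p q. DC n U p \<longrightarrow> (\<forall>x\<in>U. p x = q x) \<longrightarrow> DC n U q"
    using dC unfolding diffeology_def by (elim conjE) assumption
  have D: "\<forall>n U p. open_in_Rn n U \<longrightarrow> p ` U \<subseteq> C \<longrightarrow>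
        (\<forall>u\<in>U. \<exists>V. open_in_Rn n V \<and> u \<in> V \<and> V \<subseteq> U \<and> DC n V p) \<longrightarrow> DC n U p"
    using dC unfolding diffeology_def by (elim conjE) assumption
  show "\<And>k U p. DC k U p \<Longrightarrow> open_in_Rn k U \<and> p ` U \<subseteq> C" by (rule A[rule_format])
  show "\<And>k U p q. DC k U p \<Longrightarrow> (\<forall>x\<in>U. p x = q x) \<Longrightarrow> DC k U q" using B by simp
  show "\<And>k U p. open_in_Rn k U \<Longrightarrow> p ` U \<subseteq> C \<Longrightarrow>
        (\<forall>u\<in>U. \<exists>V. open_in_Rn k V \<and> u \<in> V \<and> V \<subseteq> U \<and> DC k V p) \<Longrightarrow> DC k U p"
    using D by simp
qed

lemma chain_Inl_Inr:
  assumes "(Inl d, Inr x) \<in> (({(Inl (f s), Inr (g s)) | s. s \<in> S}) \<union> ({(Inl (f s), Inr (g s)) | s. s \<in> S})\<inverse>)\<^sup>*"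
      and "f = (\<lambda>x. x)"
  shows "d \<in> S"
  using assms(1)
proof (cases rule: converse_rtranclE)
  case base then show ?thesis by simp
next
  case (step z)
  then have "(Inl d, z) \<in> {(Inl (f s), Inr (g s)) | s. s \<in> S} \<or> (z, Inl d) \<in> {(Inl (f s), Inr (g s)) | s. s \<in> S}"
    by blast
  then show ?thesis
  proof
    assume "(Inl d, z) \<in> {(Inl (f s), Inr (g s)) | s. s \<in> S}"
    then obtain s where "Inl d = (Inl (f s) :: ('a + 'b))" "s \<in> S" by blast
    then show ?thesis using assms(2) by simp
  next
    assume "(z, Inl d) \<in> {(Inl (f s), Inr (g s)) | s. s \<in> S}"
    then show ?thesis by blast
  qed
qed

lemma pushout_induction:
  assumes po: "diff_pushout S DS B DB C DC P DP (\<lambda>x. x) g fb (\<lambda>x. x)"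
    and dC: "diffeology C DC"
    and DBim: "\<And>k V q. DB k V q \<Longrightarrow> q ` V \<subseteq> B"
    and DBS: "\<And>k V q. DB k V q \<Longrightarrow> q ` V \<subseteq> S \<Longrightarrow> DS k V q"
  shows "induction C DC P DP (\<lambda>x. x)"
proof -
  have smg: "smooth_map S DS C DC g" using po unfolding diff_pushout_def by (elim conjE) assumption
  have sub0: "(\<lambda>x. x) ` C \<subseteq> P" using po unfolding diff_pushout_def by (elim conjE) assumption
  then have sub: "C \<subseteq> P" by simp
  have comm0: "\<forall>s\<in>S. fb ((\<lambda>x. x) s) = g s" using po unfolding diff_pushout_def by (elim conjE) assumption
  then have comm: "\<forall>s\<in>S. fb s = g s" by simp
  have rel: "\<forall>x\<in>B <+> C. \<forall>y\<in>B <+> C.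
        case_sum fb (\<lambda>x. x) x = case_sum fb (\<lambda>x. x) y \<longleftrightarrow>
        (x, y) \<in> (({(Inl ((\<lambda>x. x) s), Inr (g s)) | s. s \<in> S}) \<union> ({(Inl ((\<lambda>x. x) s), Inr (g s)) | s. s \<in> S})\<inverse>)\<^sup>*"
    using po unfolding diff_pushout_def by (elim conjE) assumption
  have DPi0: "\<forall>k U p. DP k U p \<longleftrightarrow> open_in_Rn k U \<and> p ` U \<subseteq> P \<and>
        (\<forall>x\<in>U. \<exists>V. open_in_Rn k V \<and> x \<in> V \<and> V \<subseteq> U \<and>
           ((\<exists>q. DB k V q \<and> (\<forall>y\<in>V. p y = fb (q y))) \<or>
            (\<exists>q. DC k V q \<and> (\<forall>y\<in>V. p y = (\<lambda>x. x) (q y)))))"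
    using po unfolding diff_pushout_def by (elim conjE) assumption
  note DPi = DPi0[THEN spec, THEN spec, THEN spec]
  note ax1 = diffeo_axs(1)[OF dC] and ax2 = diffeo_axs(2)[OF dC] and ax4 = diffeo_axs(3)[OF dC]
  have plotC: "DP k U p" if "DC k U p" for k U p
  proof -
    from ax1[OF that] sub have oU0: "open_in_Rn k U" and iU0: "p ` U \<subseteq> P" by auto
    have "\<forall>x\<in>U. \<exists>V. open_in_Rn k V \<and> x \<in> V \<and> V \<subseteq> U \<and>
           ((\<exists>q. DB k V q \<and> (\<forall>y\<in>V. p y = fb (q y))) \<or>
            (\<exists>q. DC k V q \<and> (\<forall>y\<in>V. p y = (\<lambda>x. x) (q y))))"
    proof
      fix x assume "x \<in> U"
      then have "open_in_Rn k U \<and> x \<in> U \<and> U \<subseteq> U \<and>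
           ((\<exists>q. DB k U q \<and> (\<forall>y\<in>U. p y = fb (q y))) \<or>
            (\<exists>q. DC k U q \<and> (\<forall>y\<in>U. p y = (\<lambda>x. x) (q y))))" using oU0 that by auto
      then show "\<exists>V. open_in_Rn k V \<and> x \<in> V \<and> V \<subseteq> U \<and>
           ((\<exists>q. DB k V q \<and> (\<forall>y\<in>V. p y = fb (q y))) \<or>
            (\<exists>q. DC k V q \<and> (\<forall>y\<in>V. p y = (\<lambda>x. x) (q y))))" by (rule exI)
    qed
    then show ?thesis using oU0 iU0 by (simp only: DPi)
  qed
  have backC: "DC k U p" if h1: "DP k U p" and h2: "p ` U \<subseteq> C" for k U p
  proof -
    from h1 have h1b: "open_in_Rn k U \<and> p ` U \<subseteq> P \<and> (\<forall>x\<in>U. \<exists>V. open_in_Rn k V \<and> x \<in> V \<and> V \<subseteq> U \<and>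
           ((\<exists>q. DB k V q \<and> (\<forall>y\<in>V. p y = fb (q y))) \<or>
            (\<exists>q. DC k V q \<and> (\<forall>y\<in>V. p y = (\<lambda>x. x) (q y)))))" unfolding DPi .
    have oU: "open_in_Rn k U" using h1b by (rule conjunct1)
    have loc: "\<forall>x\<in>U. \<exists>V. open_in_Rn k V \<and> x \<in> V \<and> V \<subseteq> U \<and>
           ((\<exists>q. DB k V q \<and> (\<forall>y\<in>V. p y = fb (q y))) \<or>
            (\<exists>q. DC k V q \<and> (\<forall>y\<in>V. p y = (\<lambda>x. x) (q y))))" using h1b by (elim conjE)
    show ?thesis
    proof (rule ax4[OF oU h2], intro ballI)
      fix u assume "u \<in> U"
      obtain V where VV: "open_in_Rn k V \<and> u \<in> V \<and> V \<subseteq> U \<and>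
           ((\<exists>q. DB k V q \<and> (\<forall>y\<in>V. p y = fb (q y))) \<or>
            (\<exists>q. DC k V q \<and> (\<forall>y\<in>V. p y = (\<lambda>x. x) (q y))))"
        using bspec[OF loc \<open>u \<in> U\<close>] by (rule exE)
      have V1: "open_in_Rn k V" using VV by (elim conjE)
      have V2: "u \<in> V" using VV by (elim conjE)
      have V3: "V \<subseteq> U" using VV by (elim conjE)
      note V = V1 V2 V3
      have dis: "(\<exists>q. DB k V q \<and> (\<forall>y\<in>V. p y = fb (q y))) \<or>
            (\<exists>q. DC k V q \<and> (\<forall>y\<in>V. p y = (\<lambda>x. x) (q y)))" using VV by (elim conjE)
      have "DC k V p"
        using dis
      proof
        assume "\<exists>q. DC k V q \<and> (\<forall>y\<in>V. p y = (\<lambda>x. x) (q y))"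
        then obtain q where "DC k V q" "\<forall>y\<in>V. p y = q y" by auto
        then show ?thesis by (intro ax2[of k V q p]) auto
      next
        assume "\<exists>q. DB k V q \<and> (\<forall>y\<in>V. p y = fb (q y))"
        then obtain q where q: "DB k V q" "\<forall>y\<in>V. p y = fb (q y)" by auto
        have qS: "q y \<in> S" if "y \<in> V" for y
        proof -
          have a: "Inl (q y) \<in> B <+> C" using DBim[OF q(1)] that by auto
          have b: "Inr (p y) \<in> B <+> C" using h2 V(3) that by auto
          have "case_sum fb (\<lambda>x. x) (Inl (q y)) = case_sum fb (\<lambda>x. x) (Inr (p y))"
            using q(2) that by simp
          then have "(Inl (q y), Inr (p y)) \<in> (({(Inl ((\<lambda>x. x) s), Inr (g s)) | s. s \<in> S}) \<union> ({(Inl ((\<lambda>x. x) s), Inr (g s)) | s. s \<in> S})\<inverse>)\<^sup>*"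
            using iffD1[OF bspec[OF bspec[OF rel a] b]] by blast
          then show ?thesis by (rule chain_Inl_Inr) simp
        qed
        have "DS k V q" using DBS[OF q(1)] qS by auto
        then have "DC k V (g \<circ> q)" using smg unfolding smooth_map_def by (elim conjE) (erule allE, erule allE, erule allE, erule mp)
        moreover have "\<forall>y\<in>V. (g \<circ> q) y = p y" using q(2) qS comm by auto
        ultimately show ?thesis by (rule ax2)
      qed
      then show "\<exists>V. open_in_Rn k V \<and> u \<in> V \<and> V \<subseteq> U \<and> DC k V p" using V by (intro exI conjI)
    qed
  qed
  have inj: "inj_on (\<lambda>x. x) C" by (simp add: inj_on_def)
  show ?thesis
    unfolding induction_def diffeomorphism_def
  proof (intro conjI)
    show "inj_on (\<lambda>x. x) C" by (rule inj)
    show "smooth_map C DC P DP (\<lambda>x. x)"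
      unfolding smooth_map_def using sub plotC by (simp add: comp_def)
    show "bij_betw (\<lambda>x. x) C ((\<lambda>x. x) ` C)" by (simp add: bij_betw_def inj)
    show "smooth_map C DC ((\<lambda>x. x) ` C) (subset_diffeology DP ((\<lambda>x. x) ` C)) (\<lambda>x. x)"
      unfolding smooth_map_def subset_diffeology_def using plotC ax1 by (simp add: comp_def)
    show "smooth_map ((\<lambda>x. x) ` C) (subset_diffeology DP ((\<lambda>x. x) ` C)) C DC (inv_into C (\<lambda>x. x))"
      unfolding smooth_map_def subset_diffeology_def
    proof (intro conjI allI impI)
      show "inv_into C (\<lambda>x. x) ` (\<lambda>x. x) ` C \<subseteq> C" by (auto intro: inv_into_into)
      fix k U p assume "DP k U p \<and> p ` U \<subseteq> (\<lambda>x. x) ` C"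
      then have "DC k U p" using backC by simp
      moreover have "\<forall>y\<in>U. p y = (inv_into C (\<lambda>x. x) \<circ> p) y"
        using \<open>DC k U p\<close> ax1 inv_into_f_f[OF inj] by fastforce
      ultimately show "DC k U (inv_into C (\<lambda>x. x) \<circ> p)" by (rule ax2)
    qed
  qed
qed

lemma disk_to_sphere:
  assumes "coprod_diffeology J (\<lambda>j. fat_disk n (m j)) (\<lambda>j. fat_disk_diff n (m j)) k V q"
    and "q ` V \<subseteq> coprod_set J (\<lambda>j. fat_sphere n (m j))"
  shows "coprod_diffeology J (\<lambda>j. fat_sphere n (m j)) (\<lambda>j. fat_sphere_diff n (m j)) k V q"
  unfolding coprod_diffeology_def
proof (intro conjI ballI)
  show "open_in_Rn k V" using assms(1) unfolding coprod_diffeology_def by blast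
  show "q ` V \<subseteq> coprod_set J (\<lambda>j. fat_sphere n (m j))" by fact
  fix x assume "x \<in> V"
  then obtain W j q' where W: "open_in_Rn k W" "x \<in> W" "W \<subseteq> V" "j \<in> J"
    "fat_disk_diff n (m j) k W q'" "\<forall>y\<in>W. q y = (j, q' y)"
    using assms(1) unfolding coprod_diffeology_def by blast
  have "q' ` W \<subseteq> fat_sphere n (m j)"
  proof
    fix z assume "z \<in> q' ` W"
    then obtain y where "y \<in> W" "z = q' y" by auto
    then have "(j, z) \<in> coprod_set J (\<lambda>j. fat_sphere n (m j))" using W assms(2) by force
    then show "z \<in> fat_sphere n (m j)" unfolding coprod_set_def by simp
  qed
  then have "fat_sphere_diff n (m j) k W q'"
    using W(5) unfolding fat_disk_diff_def fat_sphere_diff_def subset_diffeology_def by simp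
  then show "\<exists>V'. open_in_Rn k V' \<and> x \<in> V' \<and> V' \<subseteq> V \<and>
         (\<exists>j\<in>J. \<exists>q'. fat_sphere_diff n (m j) k V' q' \<and> (\<forall>y\<in>V'. q y = (j, q' y)))"
    using W by blast
qed

theorem proposition5p2:
  fixes X :: "'a set" and DX :: "'a diffeology"
    and Xs :: "nat \<Rightarrow> 'a set" and DXs :: "nat \<Rightarrow> 'a diffeology"
    and J :: "nat \<Rightarrow> 'j set" and m :: "nat \<Rightarrow> 'j \<Rightarrow> nat"
    and h hh :: "nat \<Rightarrow> 'j \<times> (vec \<times> vec) \<Rightarrow> 'a"
  assumes "rel_fat_CW X DX Xs DXs J m h hh"
  shows "\<forall>n. induction (Xs n) (DXs n) (Xs (Suc n)) (DXs (Suc n)) (\<lambda>x. x)"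
proof
  fix n
  from assms have po: "diff_pushout
        (coprod_set (J n) (\<lambda>j. fat_sphere n (m n j)))
        (coprod_diffeology (J n) (\<lambda>j. fat_sphere n (m n j)) (\<lambda>j. fat_sphere_diff n (m n j)))
        (coprod_set (J n) (\<lambda>j. fat_disk n (m n j)))
        (coprod_diffeology (J n) (\<lambda>j. fat_disk n (m n j)) (\<lambda>j. fat_disk_diff n (m n j)))
        (Xs n) (DXs n)
        (Xs (Suc n)) (DXs (Suc n))
        (\<lambda>x. x) (h n) (hh n) (\<lambda>x. x)" and dC: "diffeology (Xs n) (DXs n)"
    unfolding rel_fat_CW_def by blast+
  show "induction (Xs n) (DXs n) (Xs (Suc n)) (DXs (Suc n)) (\<lambda>x. x)"
  proof (rule pushout_induction[OF po dC])
    fix k V q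
    assume "coprod_diffeology (J n) (\<lambda>j. fat_disk n (m n j)) (\<lambda>j. fat_disk_diff n (m n j)) k V q"
    then show "q ` V \<subseteq> coprod_set (J n) (\<lambda>j. fat_disk n (m n j))"
      unfolding coprod_diffeology_def by blast
  next
    fix k V q
    assume "coprod_diffeology (J n) (\<lambda>j. fat_disk n (m n j)) (\<lambda>j. fat_disk_diff n (m n j)) k V q"
      "q ` V \<subseteq> coprod_set (J n) (\<lambda>j. fat_sphere n (m n j))"
    then show "coprod_diffeology (J n) (\<lambda>j. fat_sphere n (m n j)) (\<lambda>j. fat_sphere_diff n (m n j)) k V q"
      by (rule disk_to_sphere)
  qed
qed

end
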